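(* Let $X$ be a finite set with $|X|\ge 2$, $f:2^X\to\mathbb{R}_{\ge0}$ a normalized monotone submodular function possessing supermodularity of conditioning with $f(x)>0$ for all $x\in X$, and $n\le|X|$ a positive integer. Let $x_1,\dots,x_n$ be produced by the pessimistic algorithm: $S_0=\emptyset$ and for $i=1,\dots,n$, $x_i\in\arg\max_{x\in X\setminus S_{i-1}}\underline f(x\mid S_{i-1})$, $S_i=S_{i-1}\cup\{x_i\}$. Then for $i\in\{1,2\}$ (with $i\le n$), $f(x_i\mid S_{i-1})=\max_{x\in X\setminus S_{i-1}}f(x\mid S_{i-1})$, and for every $3\le i\le n$, \[ f(x_i\mid S_{i-1})\ \ge\ \big(1-\min\{(i-1)\tau_2,1\}\big)\max_{x\in X\setminus S_{i-1}} f(x\mid S_{i-1}). \] That is, the factors $\alpha_i=1$ for $i\le2$ and $\alpha_i=1/(1-\min\{(i-1)\tau_2,1\})$ for $i>2$ (with $\alpha_i=\infty$ when $(i-1)\tau_2\ge1$) satisfy $\alpha_i f(x_i\mid S_{i-1})\ge\max_{x\in X\setminus S_{i-1}}f(x\mid S_{i-1})$.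
   Context: $f(x\mid A):=f(A\cup\{x\})-f(A)$, $f(x):=f(\{x\})$, $f(x\mid y):=f(x\mid\{y\})$. Pairwise lower estimate: $\underline f(x\mid S):=f(x)-\sum_{y\in S}(f(x)-f(x\mid y))$. 2-cardinality curvature: $\tau_2:=1-\min_{x\in X,\ y\in X\setminus\{x\}} f(x\mid y)/f(x)$. Supermodularity of conditioning: for all $S\subseteq X$, $A\subseteq B\subseteq X$, $C\subseteq X\setminus B$, $f(S\mid A)-f(S\mid A\cup C)\ge f(S\mid B)-f(S\mid B\cup C)$, where $f(T\mid A):=f(A\cup T)-f(A)$. *)

theory Defs
  imports "HOL-Analysis.Analysis"
begin

definition marg :: "('a set \<Rightarrow> real) \<Rightarrow> 'a \<Rightarrow> 'a set \<Rightarrow> real" where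
  "marg f x A = f (A \<union> {x}) - f A"

definition cond :: "('a set \<Rightarrow> real) \<Rightarrow> 'a set \<Rightarrow> 'a set \<Rightarrow> real" where
  "cond f T A = f (A \<union> T) - f A"

definition lower_est :: "('a set \<Rightarrow> real) \<Rightarrow> 'a \<Rightarrow> 'a set \<Rightarrow> real" where
  "lower_est f x S = f {x} - (\<Sum>y\<in>S. f {x} - marg f x {y})"

definition tau2 :: "('a set \<Rightarrow> real) \<Rightarrow> 'a set \<Rightarrow> real" where
  "tau2 f X = 1 - Min {marg f x {y} / f {x} | x y. x \<in> X \<and> y \<in> X - {x}}"

definition normalized :: "('a set \<Rightarrow> real) \<Rightarrow> bool" where
  "normalized f \<longleftrightarrow> f {} = 0"

definition monotone_set_fun :: "'a set \<Rightarrow> ('a set \<Rightarrow> real) \<Rightarrow> bool" where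
  "monotone_set_fun X f \<longleftrightarrow> (\<forall>A B. A \<subseteq> B \<and> B \<subseteq> X \<longrightarrow> f A \<le> f B)"

definition submodular :: "'a set \<Rightarrow> ('a set \<Rightarrow> real) \<Rightarrow> bool" where
  "submodular X f \<longleftrightarrow> (\<forall>A B. A \<subseteq> X \<and> B \<subseteq> X \<longrightarrow> f (A \<union> B) + f (A \<inter> B) \<le> f A + f B)"

definition supermodular_conditioning :: "'a set \<Rightarrow> ('a set \<Rightarrow> real) \<Rightarrow> bool" where
  "supermodular_conditioning X f \<longleftrightarrow>
     (\<forall>S A B C. S \<subseteq> X \<and> A \<subseteq> B \<and> B \<subseteq> X \<and> C \<subseteq> X - B \<longrightarrow>
        cond f S A - cond f S (A \<union> C) \<ge> cond f S B - cond f S (B \<union> C))"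

definition prefix_set :: "(nat \<Rightarrow> 'a) \<Rightarrow> nat \<Rightarrow> 'a set" where
  "prefix_set xs i = xs ` {1..i}"

end

theory Submission
  imports Defs
begin

lemma L1:
  assumes fin: "finite A" and AX: "A \<subseteq> X" and xX: "x \<in> X"
    and norm: "normalized f" and supcond: "supermodular_conditioning X f"
  shows "lower_est f x A \<le> marg f x A"
  using fin AX
proof (induction A rule: finite_induct)
  case empty
  then show ?case using norm by (simp add: lower_est_def marg_def normalized_def)
next
  case (insert y A)
  have AX: "A \<subseteq> X" and yX: "y \<in> X" using insert by auto
  have "cond f {x} {} - cond f {x} ({} \<union> {y}) \<ge> cond f {x} A - cond f {x} (A \<union> {y})"
  proof -
    have "{x} \<subseteq> X \<and> {} \<subseteq> A \<and> A \<subseteq> X \<and> {y} \<subseteq> X - A" using xX AX yX insert(2) by auto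
    thus ?thesis using supcond unfolding supermodular_conditioning_def by blast
  qed
  hence "f {x} - marg f x {y} \<ge> marg f x A - marg f x (insert y A)"
    using norm by (simp add: cond_def marg_def normalized_def insert_commute Un_commute)
  moreover have "lower_est f x (insert y A) = lower_est f x A - (f {x} - marg f x {y})"
    using insert(1,2) by (simp add: lower_est_def)
  ultimately show ?case using insert(3) AX by linarith
qed

lemma L2:
  assumes xX: "x \<in> X" and AX: "A \<subseteq> X" and xA: "x \<notin> A"
    and norm: "normalized f" and submod: "submodular X f"
  shows "marg f x A \<le> f {x}"
proof -
  have "f (A \<union> {x}) + f (A \<inter> {x}) \<le> f A + f {x}"
    using submod AX xX unfolding submodular_def by blast
  moreover have "A \<inter> {x} = {}" using xA by auto
  ultimately show ?thesis using norm by (simp add: marg_def normalized_def)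
qed

lemma L3:
  assumes xX: "x \<in> X" and AX: "A \<subseteq> X" and mono: "monotone_set_fun X f"
  shows "marg f x A \<ge> 0"
proof -
  have "A \<subseteq> A \<union> {x}" "A \<union> {x} \<subseteq> X" using AX xX by auto
  thus ?thesis using mono unfolding monotone_set_fun_def marg_def by auto
qed

lemma finT: "finite X \<Longrightarrow> finite {marg f x {y} / f {x} | x y. x \<in> X \<and> y \<in> X - {x}}"
proof -
  assume fx: "finite X"
  have "{marg f x {y} / f {x} | x y. x \<in> X \<and> y \<in> X - {x}} \<subseteq> (\<lambda>p. marg f (fst p) {snd p} / f {fst p}) ` (X \<times> X)"
  proof
    fix t assume "t \<in> {marg f x {y} / f {x} | x y. x \<in> X \<and> y \<in> X - {x}}"
    then obtain x y where "t = marg f x {y} / f {x}" "x \<in> X" "y \<in> X" by blast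
    thus "t \<in> (\<lambda>p. marg f (fst p) {snd p} / f {fst p}) ` (X \<times> X)"
      by (intro image_eqI[of _ _ "(x,y)"]) auto
  qed
  thus ?thesis using fx by (meson finite_SigmaI finite_imageI finite_subset)
qed

lemma L4:
  assumes finX: "finite X" and xX: "x \<in> X" and yX: "y \<in> X" and xy: "x \<noteq> y"
    and pos: "\<forall>x\<in>X. f {x} > 0"
  shows "marg f x {y} \<ge> (1 - tau2 f X) * f {x}"
proof -
  have "Min {marg f x {y} / f {x} | x y. x \<in> X \<and> y \<in> X - {x}} \<le> marg f x {y} / f {x}"
    by (rule Min_le[OF finT[OF finX]]) (use xX yX xy in blast)
  hence "1 - tau2 f X \<le> marg f x {y} / f {x}" by (simp add: tau2_def)
  thus ?thesis using pos xX by (simp add: pos_le_divide_eq)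
qed

lemma L5:
  assumes finX: "finite X" and cardX: "card X \<ge> 2"
    and pos: "\<forall>x\<in>X. f {x} > 0" and norm: "normalized f" and submod: "submodular X f"
  shows "tau2 f X \<ge> 0"
proof -
  obtain x y where xX: "x \<in> X" and yX: "y \<in> X" and xy: "x \<noteq> y"
  proof -
    have "\<not> card X \<le> Suc 0" using cardX by simp
    thus ?thesis using that card_le_Suc0_iff_eq[OF finX] by blast
  qed
  have "Min {marg f x {y} / f {x} | x y. x \<in> X \<and> y \<in> X - {x}} \<le> marg f x {y} / f {x}"
    by (rule Min_le[OF finT[OF finX]]) (use xX yX xy in blast)
  moreover have "marg f x {y} \<le> f {x}" using L2[OF xX _ _ norm submod, of "{y}"] yX xy by auto
  hence "marg f x {y} / f {x} \<le> 1" using pos xX by simp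
  ultimately show ?thesis by (simp add: tau2_def)
qed

theorem theorem5:
  fixes X :: "'a set" and f :: "'a set \<Rightarrow> real" and n :: nat and xs :: "nat \<Rightarrow> 'a"
  assumes finX: "finite X" and cardX: "card X \<ge> 2"
    and nonneg: "\<forall>A. A \<subseteq> X \<longrightarrow> f A \<ge> 0"
    and norm: "normalized f"
    and mono: "monotone_set_fun X f"
    and submod: "submodular X f"
    and supcond: "supermodular_conditioning X f"
    and pos: "\<forall>x\<in>X. f {x} > 0"
    and n_pos: "n \<ge> 1" and n_le: "n \<le> card X"
    and alg_mem: "\<forall>i\<in>{1..n}. xs i \<in> X - prefix_set xs (i - 1)"
    and alg_max: "\<forall>i\<in>{1..n}. \<forall>y\<in>X - prefix_set xs (i - 1).
                    lower_est f y (prefix_set xs (i - 1)) \<le> lower_est f (xs i) (prefix_set xs (i - 1))"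
  shows "(\<forall>i\<in>{1,2}. i \<le> n \<longrightarrow>
            marg f (xs i) (prefix_set xs (i - 1))
              = Max {marg f y (prefix_set xs (i - 1)) | y. y \<in> X - prefix_set xs (i - 1)})
       \<and> (\<forall>i. 3 \<le> i \<and> i \<le> n \<longrightarrow>
            marg f (xs i) (prefix_set xs (i - 1))
              \<ge> (1 - min (real (i - 1) * tau2 f X) 1)
                 * Max {marg f y (prefix_set xs (i - 1)) | y. y \<in> X - prefix_set xs (i - 1)})"
proof -
  have SX: "prefix_set xs (i - 1) \<subseteq> X" if "i \<le> n" for i
  proof
    fix z assume "z \<in> prefix_set xs (i - 1)"
    then obtain j where j: "j \<in> {1..i-1}" "z = xs j" unfolding prefix_set_def by blast
    then have "j \<in> {1..n}" using that by auto
    then show "z \<in> X" using alg_mem j(2) by blast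
  qed
  have finM: "finite {marg f y S | y. y \<in> X - S}" for S
  proof -
    have "{marg f y S | y. y \<in> X - S} = (\<lambda>y. marg f y S) ` (X - S)" by blast
    thus ?thesis using finX by simp
  qed
  have part1: "marg f (xs i) (prefix_set xs (i - 1))
              = Max {marg f y (prefix_set xs (i - 1)) | y. y \<in> X - prefix_set xs (i - 1)}"
    if "i \<in> {1,2}" "i \<le> n" for i
  proof -
    let ?S = "prefix_set xs (i - 1)"
    have im: "i \<in> {1..n}" using that by auto
    have eq: "lower_est f y ?S = marg f y ?S" for y
    proof (cases "i = 1")
      case True
      then show ?thesis using norm by (simp add: prefix_set_def lower_est_def marg_def normalized_def)
    next
      case False
      then have "i = 2" using that by auto
      then show ?thesis by (simp add: prefix_set_def lower_est_def)
    qed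
    have A: "\<forall>y\<in>X - ?S. marg f y ?S \<le> marg f (xs i) ?S"
      using bspec[OF alg_max im] unfolding eq .
    have B: "xs i \<in> X - ?S" using alg_mem im by blast
    show ?thesis
      apply (rule sym, rule Max_eqI[OF finM])
      using A B by auto
  qed
  have part2: "marg f (xs i) (prefix_set xs (i - 1))
              \<ge> (1 - min (real (i - 1) * tau2 f X) 1)
                 * Max {marg f y (prefix_set xs (i - 1)) | y. y \<in> X - prefix_set xs (i - 1)}"
    if "3 \<le> i" "i \<le> n" for i
  proof -
    let ?S = "prefix_set xs (i - 1)"
    let ?M = "{marg f y ?S | y. y \<in> X - ?S}"
    have im: "i \<in> {1..n}" using that by auto
    have S: "?S \<subseteq> X" using SX that by auto
    have xi: "xs i \<in> X - ?S" using bspec[OF alg_mem im] .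
    have finS: "finite ?S" by (simp add: prefix_set_def)
    have cardS: "card ?S \<le> i - 1" unfolding prefix_set_def
      using card_image_le[of "{1..i-1}" xs] by simp
    have t0: "tau2 f X \<ge> 0" using L5[OF finX cardX pos norm submod] .
    have "?M \<noteq> {}" using xi by auto
    then have "Max ?M \<in> ?M" using Max_in[OF finM] by blast
    then obtain y where yS: "y \<in> X - ?S" and My: "Max ?M = marg f y ?S" by blast
    have xiX: "xs i \<in> X" using xi by blast
    have m0: "marg f (xs i) ?S \<ge> 0" using L3[OF xiX S mono] .
    show ?thesis
    proof (cases "real (i - 1) * tau2 f X \<ge> 1")
      case True
      then have "min (real (i - 1) * tau2 f X) 1 = 1" by (rule min_absorb2)
      then show ?thesis using m0 unfolding \<open>min (real (i - 1) * tau2 f X) 1 = 1\<close> by simp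
    next
      case False
      let ?c = "1 - real (i - 1) * tau2 f X"
      have c0: "?c \<ge> 0" using False by simp
      have yX: "y \<in> X" using yS by auto
      have fy: "f {y} > 0" using pos yX by auto
      have summ: "f {y} - marg f y {z} \<le> tau2 f X * f {y}" if "z \<in> ?S" for z
      proof -
        have "z \<in> X" "y \<noteq> z" using that S yS by auto
        hence "marg f y {z} \<ge> (1 - tau2 f X) * f {y}" using L4[OF finX yX, of z] pos by blast
        thus ?thesis by (simp add: algebra_simps)
      qed
      have "(\<Sum>z\<in>?S. f {y} - marg f y {z}) \<le> (\<Sum>z\<in>?S. tau2 f X * f {y})"
        by (rule sum_mono) (rule summ)
      also have "\<dots> = real (card ?S) * (tau2 f X * f {y})" by simp
      also have "\<dots> \<le> real (i - 1) * (tau2 f X * f {y})"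
        using cardS t0 fy by (intro mult_right_mono) auto
      finally have sm: "(\<Sum>z\<in>?S. f {y} - marg f y {z}) \<le> real (i - 1) * (tau2 f X * f {y})" .
      have "lower_est f y ?S \<ge> ?c * f {y}"
        unfolding lower_est_def using sm by (simp add: algebra_simps)
      moreover have "lower_est f y ?S \<le> lower_est f (xs i) ?S" using bspec[OF bspec[OF alg_max im] yS] .
      moreover have "lower_est f (xs i) ?S \<le> marg f (xs i) ?S"
        using L1[OF finS S xiX norm supcond] .
      moreover have ynS: "y \<notin> ?S" using yS by blast
      have "marg f y ?S \<le> f {y}" using L2[OF yX S ynS norm submod] .
      hence "?c * marg f y ?S \<le> ?c * f {y}" using c0 by (rule mult_left_mono)
      moreover have "min (real (i - 1) * tau2 f X) 1 = real (i - 1) * tau2 f X" using False by simp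
      ultimately show ?thesis unfolding My by linarith
    qed
  qed
  show ?thesis
  proof (intro conjI ballI impI allI)
    fix i :: nat assume "i \<in> {1,2}" "i \<le> n"
    then show "marg f (xs i) (prefix_set xs (i - 1))
              = Max {marg f y (prefix_set xs (i - 1)) | y. y \<in> X - prefix_set xs (i - 1)}"
      by (rule part1)
  next
    fix i :: nat assume "3 \<le> i \<and> i \<le> n"
    then show "marg f (xs i) (prefix_set xs (i - 1))
              \<ge> (1 - min (real (i - 1) * tau2 f X) 1)
                 * Max {marg f y (prefix_set xs (i - 1)) | y. y \<in> X - prefix_set xs (i - 1)}"
      using part2 by blast
  qed
qed

end
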